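(* Let $\mathcal{A},\mathcal{B}\subseteq\mathcal{S}$ be finite sets of permutations and let $$A=\{\vec v\in[0,1]^{\mathcal A}\mid\exists(\sigma^m)\in\mathcal{S}^{\mathbb N}:|\sigma^m|\to\infty,\ (\widetilde{\mathrm{c\text{-}occ}}(\pi,\sigma^m))_{\pi\in\mathcal A}\to\vec v\},$$ $$B=\{\vec v\in[0,1]^{\mathcal B}\mid\exists(\sigma^m)\in\mathcal{S}^{\mathbb N}:|\sigma^m|\to\infty,\ (\widetilde{\mathrm{occ}}(\pi,\sigma^m))_{\pi\in\mathcal B}\to\vec v\},$$ $$C=\{\vec v\in[0,1]^{\mathcal A\sqcup\mathcal B}\mid\exists(\sigma^m)\in\mathcal{S}^{\mathbb N}:|\sigma^m|\to\infty,\ (\widetilde{\mathrm{c\text{-}occ}}(\pi,\sigma^m))_{\pi\in\mathcal A}\to\vec v_{\mathcal A},\ (\widetilde{\mathrm{occ}}(\pi,\sigma^m))_{\pi\in\mathcal B}\to\vec v_{\mathcal B}\}.$$ Then $A\times B=C$. More precisely, if $\vec v_A\in A$, $\vec v_B\in B$ and $(\sigma^m_A)_m$, $(\sigma^m_B)_m$ are sequences of permutations with $|\sigma^m_A|\to\infty$, $(\widetilde{\mathrm{c\text{-}occ}}(\pi,\sigma^m_A))_{\pi\in\mathcal A}\to\vec v_A$, $|\sigma^m_B|\to\infty$, $(\widetilde{\mathrm{occ}}(\pi,\sigma^m_B))_{\pi\in\mathcal B}\to\vec v_B$, then the sequence $\sigma^m_C:=\sigma^m_B[\sigma^m_A,\dots,\sigma^m_A]$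 satisfies $|\sigma^m_C|\to\infty$, $(\widetilde{\mathrm{c\text{-}occ}}(\pi,\sigma^m_C))_{\pi\in\mathcal A}\to\vec v_A$ and $(\widetilde{\mathrm{occ}}(\pi,\sigma^m_C))_{\pi\in\mathcal B}\to\vec v_B$.
   Context: $\mathcal{S}_n$ is the set of permutations of $[n]$, $\mathcal{S}$ the set of all finite permutations. For $\sigma\in\mathcal{S}_n$ and $I\subseteq[n]$, $\mathrm{pat}_I(\sigma)$ is the unique permutation of $[|I|]$ order-isomorphic to $(\sigma(i))_{i\in I}$. For $\pi\in\mathcal{S}_k$ and $\sigma\in\mathcal{S}_n$ ($n\ge k$): $\mathrm{occ}(\pi,\sigma)$ is the number of subsets $I\subseteq[n]$ with $\mathrm{pat}_I(\sigma)=\pi$ and $\widetilde{\mathrm{occ}}(\pi,\sigma)=\mathrm{occ}(\pi,\sigma)/\binom nk$; $\mathrm{c\text{-}occ}(\pi,\sigma)$ is the number of intervals $I\subseteq[n]$ with $\mathrm{pat}_I(\sigma)=\pi$ and $\widetilde{\mathrm{c\text{-}occ}}(\pi,\sigma)=\mathrm{c\text{-}occ}(\pi,\sigma)/n$ (these are taken to be $0$ when $n<k$). For $\theta\in\mathcal{S}_d$ and permutations $\nu^{(1)},\dots,\nu^{(d)}$, the substitution $\theta[\nu^{(1)},\dots,\nu^{(d)}]$ is the permutation of size $\sum_i|\nu^{(i)}|$ obtained by replacing, in the diagram of $\theta$ (points $(i,\theta(i))$), each point $(i,\theta(i))$ by the diagram of $\nu^{(i)}$ and rescaling rows and columns; i.e.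 its entries split into consecutive blocks of sizes $|\nu^{(1)}|,\dots,|\nu^{(d)}|$, the $i$-th block is order-isomorphic to $\nu^{(i)}$, and every entry of block $i$ is smaller than every entry of block $j$ iff $\theta(i)<\theta(j)$. *)

theory Defs
  imports "HOL-Analysis.Analysis" "HOL-Library.FuncSet"
begin

text \<open>A permutation of [n] is represented 0-based as a list of length n which is an
  arrangement of 0,...,n-1: entry i (0-based position) is the value sigma(i+1)-1.\<close>
definition is_perm :: "nat list \<Rightarrow> bool" where
  "is_perm xs \<longleftrightarrow> distinct xs \<and> set xs = {0..<length xs}"

definition std :: "nat list \<Rightarrow> nat list" where
  "std xs = map (\<lambda>x. card {y \<in> set xs. y < x}) xs"

definition pat :: "nat set \<Rightarrow> nat list \<Rightarrow> nat list" where
  "pat I \<sigma> = std (nths \<sigma> I)"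

definition occ :: "nat list \<Rightarrow> nat list \<Rightarrow> nat" where
  "occ \<pi> \<sigma> = card {I. I \<subseteq> {..<length \<sigma>} \<and> pat I \<sigma> = \<pi>}"

definition occ_t :: "nat list \<Rightarrow> nat list \<Rightarrow> real" where
  "occ_t \<pi> \<sigma> = (if length \<sigma> < length \<pi> then 0
      else real (occ \<pi> \<sigma>) / real (length \<sigma> choose length \<pi>))"

definition cocc :: "nat list \<Rightarrow> nat list \<Rightarrow> nat" where
  "cocc \<pi> \<sigma> = card {I. (\<exists>i j. I = {i..<j}) \<and> I \<subseteq> {..<length \<sigma>} \<and> pat I \<sigma> = \<pi>}"

definition cocc_t :: "nat list \<Rightarrow> nat list \<Rightarrow> real" where
  "cocc_t \<pi> \<sigma> = (if length \<sigma> < length \<pi> then 0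
      else real (cocc \<pi> \<sigma>) / real (length \<sigma>))"

text \<open>Substitution theta[nu_1,...,nu_d]: block i is nu_i shifted by the total size of the
  blocks j with theta(j) < theta(i).\<close>
definition subst :: "nat list \<Rightarrow> nat list list \<Rightarrow> nat list" where
  "subst \<theta> \<nu>s = concat (map (\<lambda>i. map (\<lambda>x. x + sum_list [length (\<nu>s ! j). j \<leftarrow> [0..<length \<theta>], \<theta> ! j < \<theta> ! i]) (\<nu>s ! i)) [0..<length \<theta>])"

text \<open>Limit sets. Vectors in [0,1]^X are extensional functions X \<rightarrow> [0,1];
  [0,1]^(A \<squnion> B) is identified with [0,1]^A \<times> [0,1]^B.\<close>
definition limA :: "nat list set \<Rightarrow> (nat list \<Rightarrow> real) set" where
  "limA \<A> = {v \<in> \<A> \<rightarrow>\<^sub>E {0..1}. \<exists>s::nat \<Rightarrow> nat list. (\<forall>m. is_perm (s m)) \<and>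
      filterlim (\<lambda>m. length (s m)) at_top sequentially \<and>
      (\<forall>\<pi>\<in>\<A>. (\<lambda>m. cocc_t \<pi> (s m)) \<longlonglongrightarrow> v \<pi>)}"

definition limB :: "nat list set \<Rightarrow> (nat list \<Rightarrow> real) set" where
  "limB \<B> = {v \<in> \<B> \<rightarrow>\<^sub>E {0..1}. \<exists>s::nat \<Rightarrow> nat list. (\<forall>m. is_perm (s m)) \<and>
      filterlim (\<lambda>m. length (s m)) at_top sequentially \<and>
      (\<forall>\<pi>\<in>\<B>. (\<lambda>m. occ_t \<pi> (s m)) \<longlonglongrightarrow> v \<pi>)}"

definition limC :: "nat list set \<Rightarrow> nat list set \<Rightarrow> ((nat list \<Rightarrow> real) \<times> (nat list \<Rightarrow> real)) set" where
  "limC \<A> \<B> = {(vA, vB). vA \<in> \<A> \<rightarrow>\<^sub>E {0..1} \<and> vB \<in> \<B> \<rightarrow>\<^sub>E {0..1} \<and>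
      (\<exists>s::nat \<Rightarrow> nat list. (\<forall>m. is_perm (s m)) \<and>
      filterlim (\<lambda>m. length (s m)) at_top sequentially \<and>
      (\<forall>\<pi>\<in>\<A>. (\<lambda>m. cocc_t \<pi> (s m)) \<longlonglongrightarrow> vA \<pi>) \<and>
      (\<forall>\<pi>\<in>\<B>. (\<lambda>m. occ_t \<pi> (s m)) \<longlonglongrightarrow> vB \<pi>))}"

end

theory Submission
  imports Defs
begin

lemma nths_filter_upt: "nths xs I = map ((!) xs) (filter (\<lambda>i. i \<in> I) [0..<length xs])"
proof -
  have "zip xs [0..<length xs] = map (\<lambda>i. (xs!i, i)) [0..<length xs]"
    by (rule nth_equalityI) auto
  then show ?thesis unfolding nths_def by (simp add: filter_map comp_def)
qed

lemma std_map_eq: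
  assumes "inj_on u (set L)" "inj_on v (set L)"
    "\<And>x y. x \<in> set L \<Longrightarrow> y \<in> set L \<Longrightarrow> u x < u y \<longleftrightarrow> v x < v y"
  shows "std (map u L) = std (map v L)"
proof -
  have "card {y \<in> set (map u L). y < u i} = card {y \<in> set (map v L). y < v i}" if "i \<in> set L" for i
  proof -
    have 1: "{y \<in> set (map u L). y < u i} = u ` {j \<in> set L. u j < u i}" by auto
    have 2: "{y \<in> set (map v L). y < v i} = v ` {j \<in> set L. v j < v i}" by auto
    have 3: "{j \<in> set L. u j < u i} = {j \<in> set L. v j < v i}" using assms(3) that by auto
    have "card (u ` {j \<in> set L. u j < u i}) = card {j \<in> set L. u j < u i}"
      by (rule card_image, rule inj_on_subset[OF assms(1)]) auto
    moreover have "card (v ` {j \<in> set L. v j < v i}) = card {j \<in> set L. v j < v i}"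
      by (rule card_image, rule inj_on_subset[OF assms(2)]) auto
    ultimately show ?thesis using 1 2 3 by simp
  qed
  then show ?thesis unfolding std_def by (auto intro!: map_cong)
qed

lemma pat_transfer:
  assumes "distinct xs" "distinct ys" "I \<subseteq> {..<length xs}" "J \<subseteq> {..<length ys}"
    "h ` I = J" "\<And>i i'. i \<in> I \<Longrightarrow> i' \<in> I \<Longrightarrow> i < i' \<Longrightarrow> h i < h i'"
    "\<And>i i'. i \<in> I \<Longrightarrow> i' \<in> I \<Longrightarrow> xs!i < xs!i' \<longleftrightarrow> ys!(h i) < ys!(h i')"
  shows "pat I xs = pat J ys"
proof -
  define L where "L = filter (\<lambda>i. i \<in> I) [0..<length xs]"
  have setL: "set L = I" using assms(3) unfolding L_def by auto
  have sL: "sorted_wrt (<) L" unfolding L_def by (rule sorted_wrt_filter) simp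
  have injh: "inj_on h I"
  proof (rule inj_onI)
    fix x y assume "x \<in> I" "y \<in> I" "h x = h y"
    then show "x = y" using assms(6)[of x y] assms(6)[of y x] by (cases "x < y"; cases "y < x") auto
  qed
  have sh: "sorted_wrt (<) (map h L)"
    unfolding sorted_wrt_map by (rule sorted_wrt_mono_rel[OF _ sL]) (use setL assms(6) in auto)
  have "filter (\<lambda>i. i \<in> J) [0..<length ys] = map h L"
  proof (rule sorted_distinct_set_unique)
    have "sorted_wrt (<) (filter (\<lambda>i. i \<in> J) [0..<length ys])" by (rule sorted_wrt_filter) simp
    then show "sorted (filter (\<lambda>i. i \<in> J) [0..<length ys])" "distinct (filter (\<lambda>i. i \<in> J) [0..<length ys])"
      using strict_sorted_iff by auto
    show "sorted (map h L)" "distinct (map h L)" using sh strict_sorted_iff by auto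
    show "set (filter (\<lambda>i. i \<in> J) [0..<length ys]) = set (map h L)"
      using assms(4,5) setL by auto
  qed
  then have "nths ys J = map (\<lambda>i. ys!(h i)) L" by (simp add: nths_filter_upt)
  moreover have "nths xs I = map ((!) xs) L" by (simp add: nths_filter_upt L_def)
  moreover have "std (map ((!) xs) L) = std (map (\<lambda>i. ys!(h i)) L)"
  proof (rule std_map_eq)
    show "inj_on ((!) xs) (set L)" using setL assms(1,3) by (auto intro!: inj_on_nth)
    show "inj_on (\<lambda>i. ys ! h i) (set L)"
    proof (rule inj_onI)
      fix x y assume "x \<in> set L" "y \<in> set L" "ys ! h x = ys ! h y"
      moreover have "h x < length ys" "h y < length ys" using calculation assms(4,5) setL by auto
      ultimately show "x = y" using assms(2) injh setL by (metis inj_on_def nth_eq_iff_index_eq)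
    qed
    show "\<And>x y. x \<in> set L \<Longrightarrow> y \<in> set L \<Longrightarrow> (xs ! x < xs ! y) = (ys ! h x < ys ! h y)"
      using assms(7) setL by auto
  qed
  ultimately show ?thesis unfolding pat_def by simp
qed

lemma concat_blocks_len:
  "length (concat (map (\<lambda>i. map (g i) a) [0..<q])) = q * length a"
  by (induction q) auto

lemma concat_blocks_nth:
  "k < q * length a \<Longrightarrow> concat (map (\<lambda>i. map (g i) a) [0..<q]) ! k = g (k div length a) (a ! (k mod length a))"
proof (induction q arbitrary: k)
  case 0 then show ?case by simp
next
  case (Suc q)
  show ?case
  proof (cases "k < q * length a")
    case True then show ?thesis using Suc.IH by (simp add: nth_append concat_blocks_len)
  next
    case False
    have kd: "k div length a = q" using False Suc.prems by (intro div_nat_eqI) (auto simp: mult.commute)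
    have km: "k mod length a = k - q * length a" using kd by (metis minus_div_mult_eq_mod)
    have "k - q * length a < length a" using False Suc.prems by simp
    then show ?thesis using False kd km by (simp add: nth_append concat_blocks_len)
  qed
qed

lemma perm_bound: "is_perm b \<Longrightarrow> i < length b \<Longrightarrow> b ! i < length b"
  unfolding is_perm_def by (metis atLeastLessThan_iff nth_mem)

lemma perm_rank:
  assumes "is_perm b" "i < length b"
  shows "card {j. j < length b \<and> b!j < b!i} = b!i"
proof -
  have "(!) b ` {j. j < length b \<and> b!j < b!i} = {..<b!i}"
  proof
    show "(!) b ` {j. j < length b \<and> b!j < b!i} \<subseteq> {..<b!i}" by auto
    show "{..<b!i} \<subseteq> (!) b ` {j. j < length b \<and> b!j < b!i}"
    proof
      fix v assume v: "v \<in> {..<b!i}"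
      then have "v \<in> set b" using perm_bound[OF assms] assms(1) unfolding is_perm_def by auto
      then obtain j where "j < length b" "b!j = v" by (auto simp: in_set_conv_nth)
      then show "v \<in> (!) b ` {j. j < length b \<and> b!j < b!i}" using v by auto
    qed
  qed
  moreover have "inj_on ((!) b) {j. j < length b \<and> b!j < b!i}"
    using assms(1) unfolding is_perm_def by (auto intro!: inj_on_nth)
  ultimately show ?thesis by (metis card_image card_lessThan)
qed

lemma cmi: "concat (map (\<lambda>j. if P j then [f j] else []) xs) = map f (filter P xs)"
  by (induction xs) auto

lemma subst_eq:
  assumes "is_perm b"
  shows "subst b (replicate (length b) a) = concat (map (\<lambda>i. map (\<lambda>x. x + length a * b!i) a) [0..<length b])"
proof -
  have key: "sum_list [length (replicate (length b) a ! j). j \<leftarrow> [0..<length b], b ! j < b ! i] = length a * b!i"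
    if i: "i < length b" for i
  proof -
  have e: "[length (replicate (length b) a ! j). j \<leftarrow> [0..<length b], b ! j < b ! i]
      = map (\<lambda>j. length a) (filter (\<lambda>j. b!j < b!i) [0..<length b])"
  proof -
    have "[length (replicate (length b) a ! j). j \<leftarrow> [0..<length b], b ! j < b ! i]
      = map (\<lambda>j. length (replicate (length b) a ! j)) (filter (\<lambda>j. b!j < b!i) [0..<length b])"
      by (rule cmi)
    also have "\<dots> = map (\<lambda>j. length a) (filter (\<lambda>j. b!j < b!i) [0..<length b])"
      by (intro map_cong) auto
    finally show ?thesis .
  qed
  have "length (filter (\<lambda>j. b!j < b!i) [0..<length b]) = b!i"
    using perm_rank[OF assms i] by (simp add: distinct_length_filter Int_def conj_commute)
  then show ?thesis
    unfolding e by (simp add: sum_list_triv)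
  qed
  show ?thesis unfolding subst_def
    apply (rule arg_cong[where f=concat], rule map_cong[OF refl])
    using key by auto
qed

lemma divmod_unique:
  fixes x y u w p :: nat
  assumes "x < p" "y < p" "x + p * u = y + p * w"
  shows "x = y \<and> u = w"
proof -
  have m1: "(x + p * u) mod p = x" using assms(1) by simp
  have m2: "(y + p * w) mod p = y" using assms(2) by simp
  have "x = y" using m1 m2 unfolding assms(3) by simp
  moreover have "p > 0" using assms by simp
  ultimately show ?thesis using assms(3) by simp
qed

lemma block_perm:
  assumes a: "is_perm a" and b: "is_perm b" and len: "length c = length a * length b"
    and nth: "\<And>k. k < length c \<Longrightarrow> c ! k = a ! (k mod length a) + length a * b ! (k div length a)"
  shows "is_perm c"
proof -
  define p where "p = length a"
  define q where "q = length b"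
  have ap: "\<And>r. r < p \<Longrightarrow> a!r < p" using perm_bound[OF a] p_def by auto
  have bq: "\<And>t. t < q \<Longrightarrow> b!t < q" using perm_bound[OF b] q_def by auto
  have dq: "\<And>k. k < p*q \<Longrightarrow> k div p < q" by (simp add: less_mult_imp_div_less mult.commute)
  have mp: "\<And>k. k < p*q \<Longrightarrow> k mod p < p" by (metis mod_less_divisor mult_0 neq0_conv not_less_zero)
  have dist: "distinct c"
  proof (subst distinct_conv_nth, intro allI impI)
    fix i j assume ij: "i < length c" "j < length c" "i \<noteq> j"
    show "c!i \<noteq> c!j"
    proof
      assume "c!i = c!j"
      then have "a ! (i mod p) + p * b ! (i div p) = a ! (j mod p) + p * b ! (j div p)"
        using nth ij p_def by simp
      moreover have "i mod p < p" "j mod p < p" using ij len mp p_def q_def by auto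
      ultimately have "a ! (i mod p) = a ! (j mod p) \<and> b ! (i div p) = b ! (j div p)"
        using divmod_unique ap by blast
      then have "i mod p = j mod p \<and> i div p = j div p"
        using a b ij len mp dq p_def q_def unfolding is_perm_def by (simp add: nth_eq_iff_index_eq)
      then show False using ij(3) by (metis div_mult_mod_eq)
    qed
  qed
  have "set c \<subseteq> {0..<length c}"
  proof
    fix x assume "x \<in> set c"
    then obtain k where k: "k < length c" "c!k = x" by (auto simp: in_set_conv_nth)
    have "a ! (k mod p) + p * b ! (k div p) < p + p * b ! (k div p)" using ap mp k len p_def q_def by simp
    also have "\<dots> = p * (b ! (k div p) + 1)" by simp
    also have "\<dots> \<le> p * q"
    proof -
      have "b ! (k div p) + 1 \<le> q" using bq dq k len p_def q_def by (simp add: Suc_leI)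
      then show ?thesis using mult_le_mono2 by blast
    qed
    finally show "x \<in> {0..<length c}" using k nth len p_def q_def by simp
  qed
  moreover have "card (set c) = card {0..<length c}" using dist by (simp add: distinct_card)
  ultimately have "set c = {0..<length c}" by (simp add: card_subset_eq)
  then show ?thesis using dist unfolding is_perm_def by simp
qed

lemma length_pat: "I \<subseteq> {..<length \<sigma>} \<Longrightarrow> length (pat I \<sigma>) = card I"
proof -
  assume a: "I \<subseteq> {..<length \<sigma>}"
  have "{i. i < length \<sigma> \<and> i \<in> I} = I" using a by auto
  then show ?thesis unfolding pat_def std_def by (simp add: length_nths)
qed

lemma cocc_nil: "cocc [] \<sigma> = 1"
proof -
  have "{I. (\<exists>i j. I = {i..<j}) \<and> I \<subseteq> {..<length \<sigma>} \<and> pat I \<sigma> = []} = {{}}"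
  proof (intro equalityI subsetI)
    fix I assume "I \<in> {I. (\<exists>i j. I = {i..<j}) \<and> I \<subseteq> {..<length \<sigma>} \<and> pat I \<sigma> = []}"
    then have I: "I \<subseteq> {..<length \<sigma>}" "pat I \<sigma> = []" by auto
    then have "card I = 0" using length_pat[OF I(1)] by simp
    moreover have "finite I" using I(1) finite_subset by blast
    ultimately show "I \<in> {{}}" by simp
  next
    fix I :: "nat set" assume "I \<in> {{}}"
    then have I: "I = {}" by simp
    have "pat {} \<sigma> = []" by (simp add: pat_def std_def)
    moreover have "{} = {0..<(0::nat)}" by simp
    ultimately show "I \<in> {I. (\<exists>i j. I = {i..<j}) \<and> I \<subseteq> {..<length \<sigma>} \<and> pat I \<sigma> = []}"
      using I by blast
  qed
  then show ?thesis unfolding cocc_def by simp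
qed

lemma cocc_alt:
  assumes "length \<pi> \<ge> 1"
  shows "cocc \<pi> \<sigma> = card {i. i + length \<pi> \<le> length \<sigma> \<and> pat {i..<i+length \<pi>} \<sigma> = \<pi>}"
proof -
  define k where "k = length \<pi>"
  have "{I. (\<exists>i j. I = {i..<j}) \<and> I \<subseteq> {..<length \<sigma>} \<and> pat I \<sigma> = \<pi>}
      = (\<lambda>i. {i..<i+k}) ` {i. i + k \<le> length \<sigma> \<and> pat {i..<i+k} \<sigma> = \<pi>}"
  proof (intro equalityI subsetI)
    fix I assume "I \<in> {I. (\<exists>i j. I = {i..<j}) \<and> I \<subseteq> {..<length \<sigma>} \<and> pat I \<sigma> = \<pi>}"
    then obtain i j where I: "I = {i..<j}" "I \<subseteq> {..<length \<sigma>}" "pat I \<sigma> = \<pi>" by auto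
    then have "card I = k" using length_pat[OF I(2)] I(3) k_def by simp
    then have j: "j = i + k" using I(1) assms k_def by simp
    then have "i + k - 1 \<in> I" using I(1) assms k_def by auto
    then have "i + k \<le> length \<sigma>" using I(2) by auto
    then show "I \<in> (\<lambda>i. {i..<i+k}) ` {i. i + k \<le> length \<sigma> \<and> pat {i..<i+k} \<sigma> = \<pi>}"
      using I j by auto
  next
    fix I assume "I \<in> (\<lambda>i. {i..<i+k}) ` {i. i + k \<le> length \<sigma> \<and> pat {i..<i+k} \<sigma> = \<pi>}"
    then show "I \<in> {I. (\<exists>i j. I = {i..<j}) \<and> I \<subseteq> {..<length \<sigma>} \<and> pat I \<sigma> = \<pi>}" by auto
  qed
  moreover have "inj_on (\<lambda>i. {i..<i+k}) {i. i + k \<le> length \<sigma> \<and> pat {i..<i+k} \<sigma> = \<pi>}"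
  proof (rule inj_onI)
    fix x y assume eq: "{x..<x+k} = {y..<y+k}"
    have "x \<in> {x..<x+k}" "y \<in> {y..<y+k}" using assms k_def by auto
    then have "x \<in> {y..<y+k}" "y \<in> {x..<x+k}" using eq by auto
    then show "x = y" by auto
  qed
  ultimately show ?thesis unfolding cocc_def k_def by (simp add: card_image)
qed

lemma card_mod_count:
  assumes "p > 0"
  shows "card {i. i < p * q \<and> P (i mod p)} = q * card {r. r < p \<and> P r}"
proof -
  have "{i. i < p * q \<and> P (i mod p)} = (\<lambda>(t,r). t*p + r) ` ({..<q} \<times> {r. r < p \<and> P r})"
  proof (intro equalityI subsetI)
    fix i assume "i \<in> {i. i < p * q \<and> P (i mod p)}"
    then have "i = (\<lambda>(t,r). t*p + r) (i div p, i mod p)" "i div p < q" "i mod p < p" "P (i mod p)"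
      using assms by (auto simp: less_mult_imp_div_less mult.commute)
    then show "i \<in> (\<lambda>(t,r). t*p + r) ` ({..<q} \<times> {r. r < p \<and> P r})" by blast
  next
    fix i assume "i \<in> (\<lambda>(t,r). t*p + r) ` ({..<q} \<times> {r. r < p \<and> P r})"
    then obtain t r where tr: "i = t*p + r" "t < q" "r < p" "P r" by auto
    have "t*p + r < (t+1)*p" using tr by simp
    also have "\<dots> \<le> q * p" using tr by (intro mult_le_mono1) simp
    finally show "i \<in> {i. i < p * q \<and> P (i mod p)}" using tr by (simp add: mult.commute)
  qed
  moreover have "inj_on (\<lambda>(t,r). t*p + r) ({..<q} \<times> {r. r < p \<and> P r})"
  proof (rule inj_onI, clarsimp)
    fix t r t' r' assume "t * p + r = t' * p + r'" "r < p" "r' < p"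
    then show "t = t' \<and> r = r'" using divmod_unique[of r p r' t t'] by (simp add: mult.commute add.commute)
  qed
  ultimately show ?thesis by (simp add: card_image card_cartesian_product)
qed

locale blk =
  fixes a b c :: "nat list"
  assumes pa: "is_perm a" and pb: "is_perm b" and lenc: "length c = length a * length b"
    and nthc: "\<And>k. k < length c \<Longrightarrow> c ! k = a ! (k mod length a) + length a * b ! (k div length a)"
begin

lemma pc: "is_perm c" using block_perm[OF pa pb lenc nthc] .

lemma window:
  assumes i: "i < length a * length b" and k: "i mod length a + k \<le> length a"
  shows "i + k \<le> length c" "pat {i..<i+k} c = pat {i mod length a..<i mod length a + k} a"
proof -
  define p where "p = length a"
  define q where "q = length b"
  define t where "t = i div p"
  define r where "r = i mod p"
  have p0: "p > 0" using i p_def by (cases p) auto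
  have iq: "i = r + t * p" unfolding r_def t_def by simp
  have tq: "t < q" using i unfolding t_def p_def q_def by (simp add: less_mult_imp_div_less mult.commute)
  have "i + k \<le> t*p + p" using k iq unfolding r_def p_def by simp
  also have "\<dots> = (t+1)*p" by simp
  also have "\<dots> \<le> q * p" using tq by (intro mult_le_mono1) simp
  finally show ik: "i + k \<le> length c" using lenc p_def q_def by (simp add: mult.commute)
  have "pat {r..<r+k} a = pat {i..<i+k} c"
  proof (rule pat_transfer[where h="\<lambda>x. x + t*p"])
    show "distinct a" "distinct c" using pa pc unfolding is_perm_def by auto
    show "{r..<r + k} \<subseteq> {..<length a}" using k unfolding r_def p_def by auto
    show "{i..<i + k} \<subseteq> {..<length c}" using ik by auto
    show "(\<lambda>x. x + t * p) ` {r..<r + k} = {i..<i + k}" using iq by (simp add: add_ac)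
    show "\<And>x y. x < y \<Longrightarrow> x + t * p < y + t * p" by simp
    fix x y assume xy: "x \<in> {r..<r + k}" "y \<in> {r..<r + k}"
    have cx: "c ! (x + t*p) = a ! x + p * b ! t" if "x \<in> {r..<r + k}" for x
    proof -
      have "x < p" using that k unfolding r_def p_def by auto
      moreover have "x + t*p < length c" using that ik iq by auto
      ultimately show ?thesis using nthc p_def p0 by simp
    qed
    show "(a ! x < a ! y) = (c ! (x + t * p) < c ! (y + t * p))" using cx xy by simp
  qed
  then show "pat {i..<i+k} c = pat {i mod length a..<i mod length a + k} a" using r_def p_def by simp
qed

lemma cocc_bounds:
  assumes k: "length \<pi> \<ge> 1" and p0: "length a > 0"
  shows "length b * cocc \<pi> a \<le> cocc \<pi> c" "cocc \<pi> c \<le> length b * cocc \<pi> a + length b * length \<pi>"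
proof -
  define p where "p = length a"
  define q where "q = length b"
  define k where "k = length \<pi>"
  define Sa where "Sa = {r. r + k \<le> p \<and> pat {r..<r+k} a = \<pi>}"
  define Sc where "Sc = {i. i + k \<le> p*q \<and> pat {i..<i+k} c = \<pi>}"
  have ca: "cocc \<pi> a = card Sa" using cocc_alt[OF k] Sa_def k_def p_def by simp
  have cc: "cocc \<pi> c = card Sc" using cocc_alt[OF k] Sc_def k_def p_def q_def lenc by simp
  have Sa': "card Sa = card {r. r < p \<and> r \<in> Sa}"
    using k unfolding Sa_def k_def by (intro arg_cong[where f=card]) auto
  have A: "{i. i < p*q \<and> i mod p \<in> Sa} \<subseteq> Sc"
  proof
    fix i assume "i \<in> {i. i < p*q \<and> i mod p \<in> Sa}"
    then have "i < p*q" "i mod p + k \<le> p" "pat {i mod p..<i mod p+k} a = \<pi>" unfolding Sa_def by auto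
    then show "i \<in> Sc" using window[of i k] p_def q_def lenc unfolding Sc_def by auto
  qed
  have B: "Sc \<subseteq> {i. i < p*q \<and> i mod p \<in> Sa} \<union> {i. i < p*q \<and> p < i mod p + k}"
  proof
    fix i assume i: "i \<in> Sc"
    then have ipq: "i < p*q" using k k_def unfolding Sc_def by auto
    show "i \<in> {i. i < p*q \<and> i mod p \<in> Sa} \<union> {i. i < p*q \<and> p < i mod p + k}"
    proof (cases "i mod p + k \<le> p")
      case True
      then have "pat {i mod p..<i mod p+k} a = \<pi>" using window[of i k] i ipq p_def q_def unfolding Sc_def by auto
      then show ?thesis using True ipq unfolding Sa_def by auto
    qed (use ipq in auto)
  qed
  have finSc: "finite Sc" unfolding Sc_def by (rule finite_subset[of _ "{..p*q}"]) auto
  have c1: "card {i. i < p*q \<and> i mod p \<in> Sa} = q * card Sa"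
    using card_mod_count[of p q "\<lambda>r. r \<in> Sa"] p0 p_def Sa' by simp
  have c2: "card {i. i < p*q \<and> p < i mod p + k} \<le> q * k"
  proof -
    have "card {i. i < p*q \<and> p < i mod p + k} = q * card {r. r < p \<and> p < r + k}"
      using card_mod_count[of p q "\<lambda>r. p < r + k"] p0 p_def by simp
    moreover have "card {r. r < p \<and> p < r + k} \<le> k"
    proof -
      have "{r. r < p \<and> p < r + k} \<subseteq> {p-k..<p}" by auto
      then have "card {r. r < p \<and> p < r + k} \<le> card {p-k..<p}" by (intro card_mono) auto
      then show ?thesis by simp
    qed
    ultimately show ?thesis by simp
  qed
  show "length b * cocc \<pi> a \<le> cocc \<pi> c" using card_mono[OF finSc A] c1 ca cc q_def by simp
  have "card Sc \<le> card ({i. i < p*q \<and> i mod p \<in> Sa} \<union> {i. i < p*q \<and> p < i mod p + k})"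
    by (intro card_mono B) auto
  also have "\<dots> \<le> card {i. i < p*q \<and> i mod p \<in> Sa} + card {i. i < p*q \<and> p < i mod p + k}"
    by (rule card_Un_le)
  finally show "cocc \<pi> c \<le> length b * cocc \<pi> a + length b * length \<pi>"
    using c1 c2 ca cc q_def k_def by simp
qed

lemma cocc_t_close:
  assumes p: "length a \<ge> length \<pi>" "length a \<ge> 1" and q: "length b \<ge> 1"
  shows "\<bar>cocc_t \<pi> c - cocc_t \<pi> a\<bar> \<le> (real (length \<pi>) + 1) / real (length a)"
proof (cases "length \<pi> = 0")
  case True
  then have "\<pi> = []" by simp
  then have "cocc_t \<pi> c = 1 / (real (length a) * real (length b))" "cocc_t \<pi> a = 1 / real (length a)"
    by (simp_all add: cocc_t_def cocc_nil lenc)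
  moreover have "1 / (real (length a) * real (length b)) \<le> 1 / real (length a)"
    using p q by (simp add: divide_simps)
  moreover have "0 \<le> 1 / (real (length a) * real (length b))" by simp
  ultimately have "\<bar>cocc_t \<pi> c - cocc_t \<pi> a\<bar> \<le> 1 / real (length a)" by linarith
  then show ?thesis using True by simp
next
  case False
  define p where "p = length a"
  define q where "q = length b"
  define k where "k = length \<pi>"
  have k1: "length \<pi> \<ge> 1" using False by (simp add: Suc_le_eq)
  have p0: "p > 0" "q > 0" using p q p_def q_def by auto
  have n1: "q * cocc \<pi> a \<le> cocc \<pi> c" "cocc \<pi> c \<le> q * cocc \<pi> a + q * k"
    using cocc_bounds[OF k1] p0 p_def q_def k_def by auto
  have "real (q * cocc \<pi> a) \<le> real (cocc \<pi> c)" "real (cocc \<pi> c) \<le> real (q * cocc \<pi> a + q * k)"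
    using n1 by (simp_all only: of_nat_le_iff)
  then have b1: "real q * cocc \<pi> a \<le> cocc \<pi> c" "real (cocc \<pi> c) \<le> real q * cocc \<pi> a + real q * k"
    by simp_all
  have kc: "\<not> length c < length \<pi>" using p lenc q
    by (metis le_trans mult_le_mono2 mult_1_right not_less)
  have ta: "cocc_t \<pi> a = cocc \<pi> a / p" using p unfolding cocc_t_def p_def by simp
  have tc: "cocc_t \<pi> c = cocc \<pi> c / (p * q)" using kc unfolding cocc_t_def p_def q_def lenc by simp
  have "cocc_t \<pi> c - cocc_t \<pi> a = (cocc \<pi> c - real q * cocc \<pi> a) / (p*q)"
    using p0 unfolding ta tc by (simp add: divide_simps)
  moreover have "0 \<le> (cocc \<pi> c - real q * cocc \<pi> a) / (p*q)" using b1 by simp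
  moreover have "(cocc \<pi> c - real q * cocc \<pi> a) / (p*q) \<le> (real q * k) / (p * q)"
    using b1 p0 by (intro divide_right_mono) auto
  moreover have "(real q * k) / (p * q) = k / p" using p0 by simp
  ultimately have "\<bar>cocc_t \<pi> c - cocc_t \<pi> a\<bar> \<le> k / p" by simp
  also have "\<dots> \<le> (real k + 1) / p" by (simp add: divide_right_mono)
  finally show ?thesis using p_def k_def by simp
qed

end

lemma occ_alt: "occ \<pi> \<sigma> = card {I. I \<subseteq> {..<length \<sigma>} \<and> card I = length \<pi> \<and> pat I \<sigma> = \<pi>}"
proof -
  have "{I. I \<subseteq> {..<length \<sigma>} \<and> pat I \<sigma> = \<pi>} = {I. I \<subseteq> {..<length \<sigma>} \<and> card I = length \<pi> \<and> pat I \<sigma> = \<pi>}"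
  proof (intro Collect_cong iffI)
    fix I assume "I \<subseteq> {..<length \<sigma>} \<and> pat I \<sigma> = \<pi>"
    then show "I \<subseteq> {..<length \<sigma>} \<and> card I = length \<pi> \<and> pat I \<sigma> = \<pi>"
      using length_pat[of I \<sigma>] by auto
  qed auto
  then show ?thesis unfolding occ_def by simp
qed

lemma occ_le_choose: "occ \<pi> \<sigma> \<le> length \<sigma> choose length \<pi>"
proof -
  have "occ \<pi> \<sigma> \<le> card {I. I \<subseteq> {..<length \<sigma>} \<and> card I = length \<pi>}"
    unfolding occ_alt by (rule card_mono[OF finite_subset[of _ "Pow {..<length \<sigma>}"]]) auto
  then show ?thesis using n_subsets[of "{..<length \<sigma>}" "length \<pi>"] by simp
qed

lemma binom_ratio:
  fixes p q k :: nat
  assumes kq: "k \<le> q" and p: "p \<ge> 1"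
  shows "((real q - real k) / real q) ^ k * real (p*q choose k) \<le> real (q choose k) * real p ^ k"
proof (cases "q = 0")
  case True then show ?thesis using kq by simp
next
  case False
  have kpq: "k \<le> p*q" using kq p by (metis le_trans mult_le_mono1 mult_1)
  have e1: "real (p*q choose k) = (\<Prod>i = 0..<k. real (p*q - i) / real (k - i))"
    using binomial_altdef_of_nat[OF kpq] by simp
  have e2: "real (q choose k) = (\<Prod>i = 0..<k. real (q - i) / real (k - i))"
    using binomial_altdef_of_nat[OF kq] by simp
  have lhs: "((real q - real k) / real q) ^ k * real (p*q choose k)
     = (\<Prod>i = 0..<k. (real q - real k) / real q * (real (p*q - i) / real (k - i)))"
    unfolding e1 prod.distrib by simp
  have rhs: "real (q choose k) * real p ^ k = (\<Prod>i = 0..<k. real (q - i) / real (k - i) * real p)"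
    unfolding e2 prod.distrib by simp
  have "(\<Prod>i = 0..<k. (real q - real k) / real q * (real (p*q - i) / real (k - i)))
      \<le> (\<Prod>i = 0..<k. real (q - i) / real (k - i) * real p)"
  proof (rule prod_mono)
    fix i assume i: "i \<in> {0..<k}"
    then have ik: "i < k" by simp
    have h1: "real (p*q - i) \<le> real p * real q" by (metis diff_le_self of_nat_le_iff of_nat_mult)
    have h2: "real q - real k \<le> real (q - i)" using ik kq by simp
    have h3: "0 \<le> real q - real k" using kq by simp
    have "(real q - real k) * real (p*q - i) \<le> real (q - i) * (real p * real q)"
      by (rule mult_mono[OF h2 h1]) auto
    moreover have "real q > 0" "real (k - i) > 0" using False ik by auto
    ultimately have "(real q - real k) * real (p*q - i) / (real q * real (k - i))
        \<le> real (q - i) * (real p * real q) / (real q * real (k - i))"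
      by (intro divide_right_mono) auto
    show "0 \<le> (real q - real k) / real q * (real (p*q - i) / real (k - i)) \<and>
        (real q - real k) / real q * (real (p*q - i) / real (k - i)) \<le> real (q - i) / real (k - i) * real p"
    proof
      show "0 \<le> (real q - real k) / real q * (real (p*q - i) / real (k - i))"
        using h3 by (intro mult_nonneg_nonneg divide_nonneg_nonneg) auto
      show "(real q - real k) / real q * (real (p*q - i) / real (k - i)) \<le> real (q - i) / real (k - i) * real p"
        using \<open>real q > 0\<close> \<open>(real q - real k) * real (p*q - i) / (real q * real (k - i))
        \<le> real (q - i) * (real p * real q) / (real q * real (k - i))\<close> by (simp add: field_simps)
    qed
  qed
  then show ?thesis using lhs rhs by simp
qed

context blk
begin

abbreviation "dp \<equiv> (\<lambda>i::nat. i div length a)"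
abbreviation "blkset j \<equiv> {j * length a..<j * length a + length a}"

lemma fiber_props:
  assumes p0: "length a > 0" and J: "J \<subseteq> {..<length b}" and f: "f \<in> PiE J blkset"
  shows "f ` J \<subseteq> {..<length a * length b}" "inj_on dp (f ` J)" "dp ` (f ` J) = J"
    "card (f ` J) = card J" "\<And>j. j \<in> J \<Longrightarrow> dp (f j) = j"
proof -
  have fj: "f j \<in> blkset j" if "j \<in> J" for j using f that by auto
  show dj: "\<And>j. j \<in> J \<Longrightarrow> dp (f j) = j"
  proof -
    fix j assume "j \<in> J"
    then have "j * length a \<le> f j" "f j < j * length a + length a" using fj[of j] by auto
    then show "dp (f j) = j" by (intro div_nat_eqI) (simp_all add: mult.commute)
  qed
  show "f ` J \<subseteq> {..<length a * length b}"
  proof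
    fix x assume "x \<in> f ` J"
    then obtain j where j: "j \<in> J" "x = f j" by auto
    have "x < j * length a + length a" using fj[OF j(1)] j by auto
    also have "\<dots> = (j+1) * length a" by simp
    also have "\<dots> \<le> length b * length a" using J j by (intro mult_le_mono1) auto
    finally show "x \<in> {..<length a * length b}" by (simp add: mult.commute)
  qed
  show "inj_on dp (f ` J)"
    by (rule inj_onI) (use dj in auto)
  show "dp ` (f ` J) = J" using dj by (auto simp: image_image)
  have "inj_on f J" by (rule inj_onI) (metis dj)
  then show "card (f ` J) = card J" by (rule card_image)
qed

lemma fiber_card:
  assumes p0: "length a > 0" and J: "J \<subseteq> {..<length b}"
  shows "card ((\<lambda>f. f ` J) ` PiE J blkset) = length a ^ card J"
proof -
  have fin: "finite J" using J finite_subset by blast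
  have "inj_on (\<lambda>f. f ` J) (PiE J blkset)"
  proof (rule inj_onI)
    fix f g assume f: "f \<in> PiE J blkset" and g: "g \<in> PiE J blkset" and e: "f ` J = g ` J"
    show "f = g"
    proof (rule PiE_ext[OF f g])
      fix j assume j: "j \<in> J"
      then have "f j \<in> g ` J" using e by blast
      then obtain j' where j': "j' \<in> J" "f j = g j'" by auto
      have "j = j'" using fiber_props(5)[OF p0 J f j] fiber_props(5)[OF p0 J g j'(1)] j' by simp
      then show "f j = g j" using j' by simp
    qed
  qed
  then have "card ((\<lambda>f. f ` J) ` PiE J blkset) = card (PiE J blkset)" by (rule card_image)
  also have "\<dots> = (\<Prod>j\<in>J. card (blkset j))" using fin by (rule card_PiE)
  also have "\<dots> = length a ^ card J" by simp
  finally show ?thesis .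
qed

lemma decomp:
  assumes p0: "length a > 0"
  shows "{I. I \<subseteq> {..<length a * length b} \<and> card I = k \<and> inj_on dp I \<and> P (dp ` I)}
    = (\<Union>J \<in> {J. J \<subseteq> {..<length b} \<and> card J = k \<and> P J}. (\<lambda>f. f ` J) ` PiE J blkset)"
proof (intro equalityI subsetI)
  fix I assume "I \<in> {I. I \<subseteq> {..<length a * length b} \<and> card I = k \<and> inj_on dp I \<and> P (dp ` I)}"
  then have I: "I \<subseteq> {..<length a * length b}" "card I = k" "inj_on dp I" "P (dp ` I)" by auto
  define J where "J = dp ` I"
  have J1: "J \<subseteq> {..<length b}" using I(1) unfolding J_def
    by (auto simp: less_mult_imp_div_less mult.commute)
  have J2: "card J = k" using I(2) card_image[OF I(3)] unfolding J_def by simp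
  define f where "f = restrict (the_inv_into I dp) J"
  have fJ: "f ` J = I" unfolding f_def J_def using I(3) by simp
  have "f \<in> PiE J blkset"
  proof
    fix j assume j: "j \<in> J"
    have fjd: "f j = the_inv_into I dp j" unfolding f_def using j by simp
    have "the_inv_into I dp j \<in> I" using the_inv_into_into[OF I(3), of j I] j J_def by simp
    moreover have "dp (the_inv_into I dp j) = j" using f_the_inv_into_f[OF I(3), of j] j J_def by simp
    ultimately have "f j \<in> I" "dp (f j) = j" using fjd by simp_all
    moreover have "dp (f j) * length a + f j mod length a = f j" by (rule div_mult_mod_eq)
    moreover have "f j mod length a < length a" using p0 by simp
    ultimately show "f j \<in> blkset j" by auto
  next
    fix j assume "j \<notin> J" then show "f j = undefined" unfolding f_def by simp
  qed
  then have "I \<in> (\<lambda>f. f ` J) ` PiE J blkset" using fJ by (intro image_eqI[of _ _ f]) simp_all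
  moreover have "J \<in> {J. J \<subseteq> {..<length b} \<and> card J = k \<and> P J}" using J1 J2 I(4) J_def by simp
  ultimately show "I \<in> (\<Union>J \<in> {J. J \<subseteq> {..<length b} \<and> card J = k \<and> P J}. (\<lambda>f. f ` J) ` PiE J blkset)"
    by (rule UN_I[rotated])
next
  fix I assume "I \<in> (\<Union>J \<in> {J. J \<subseteq> {..<length b} \<and> card J = k \<and> P J}. (\<lambda>f. f ` J) ` PiE J blkset)"
  then obtain J f where J: "J \<subseteq> {..<length b}" "card J = k" "P J" and f: "f \<in> PiE J blkset" and I: "I = f ` J"
    by blast
  show "I \<in> {I. I \<subseteq> {..<length a * length b} \<and> card I = k \<and> inj_on dp I \<and> P (dp ` I)}"
    using fiber_props[OF p0 J(1) f] J I by simp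
qed

lemma count_decomp:
  assumes p0: "length a > 0"
  shows "card {I. I \<subseteq> {..<length a * length b} \<and> card I = k \<and> inj_on dp I \<and> P (dp ` I)}
    = card {J. J \<subseteq> {..<length b} \<and> card J = k \<and> P J} * length a ^ k"
proof -
  let ?JJ = "{J. J \<subseteq> {..<length b} \<and> card J = k \<and> P J}"
  have "?JJ \<subseteq> Pow {..<length b}" by blast
  then have finJJ: "finite ?JJ" by (rule finite_subset) simp
  have "card (\<Union>J \<in> ?JJ. (\<lambda>f. f ` J) ` PiE J blkset) = (\<Sum>J\<in>?JJ. card ((\<lambda>f. f ` J) ` PiE J blkset))"
  proof (rule card_UN_disjoint[OF finJJ])
    show "\<forall>J\<in>?JJ. finite ((\<lambda>f. f ` J) ` PiE J blkset)"
    proof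
      fix J assume "J \<in> ?JJ"
      then have "finite J" using finite_subset[of J "{..<length b}"] by auto
      then show "finite ((\<lambda>f. f ` J) ` PiE J blkset)" by (intro finite_imageI finite_PiE) auto
    qed
    show "\<forall>J\<in>?JJ. \<forall>J'\<in>?JJ. J \<noteq> J' \<longrightarrow> (\<lambda>f. f ` J) ` PiE J blkset \<inter> (\<lambda>f. f ` J') ` PiE J' blkset = {}"
    proof (intro ballI impI)
      fix J J' assume J: "J \<in> ?JJ" and J': "J' \<in> ?JJ" and ne: "J \<noteq> J'"
      show "(\<lambda>f. f ` J) ` PiE J blkset \<inter> (\<lambda>f. f ` J') ` PiE J' blkset = {}"
      proof (rule ccontr)
        assume "(\<lambda>f. f ` J) ` PiE J blkset \<inter> (\<lambda>f. f ` J') ` PiE J' blkset \<noteq> {}"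
        then obtain f g where f: "f \<in> PiE J blkset" and g: "g \<in> PiE J' blkset" and e: "f ` J = g ` J'" by auto
        have "dp ` (f ` J) = J" using fiber_props(3)[OF p0 _ f] J by auto
        moreover have "dp ` (g ` J') = J'" using fiber_props(3)[OF p0 _ g] J' by auto
        ultimately show False using e ne by simp
      qed
    qed
  qed
  also have "\<dots> = (\<Sum>J\<in>?JJ. length a ^ k)"
  proof (rule sum.cong[OF refl])
    fix J assume "J \<in> ?JJ"
    then show "card ((\<lambda>f. f ` J) ` PiE J blkset) = length a ^ k" using fiber_card[OF p0, of J] by simp
  qed
  also have "\<dots> = card ?JJ * length a ^ k" by simp
  finally have "card (\<Union>J \<in> ?JJ. (\<lambda>f. f ` J) ` PiE J blkset) = card ?JJ * length a ^ k" .
  then show ?thesis by (simp only: decomp[OF p0])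
qed

end

context blk
begin

lemma pat_dp:
  assumes p0: "length a > 0" and I: "I \<subseteq> {..<length a * length b}" "inj_on dp I"
  shows "pat I c = pat (dp ` I) b"
proof (rule pat_transfer[where h=dp])
  show "distinct c" "distinct b" using pc pb unfolding is_perm_def by auto
  show "I \<subseteq> {..<length c}" using I lenc by simp
  show "dp ` I \<subseteq> {..<length b}" using I(1) by (auto simp: less_mult_imp_div_less mult.commute)
  show "dp ` I = dp ` I" ..
  show "\<And>i i'. i \<in> I \<Longrightarrow> i' \<in> I \<Longrightarrow> i < i' \<Longrightarrow> dp i < dp i'"
  proof -
    fix i i' assume "i \<in> I" "i' \<in> I" "i < i'"
    then have "dp i \<le> dp i'" "dp i \<noteq> dp i'" using I(2) by (auto simp: div_le_mono inj_on_def)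
    then show "dp i < dp i'" by simp
  qed
  fix i i' assume ii: "i \<in> I" "i' \<in> I"
  show "c ! i < c ! i' \<longleftrightarrow> b ! dp i < b ! dp i'"
  proof (cases "dp i = dp i'")
    case True then have "i = i'" using I(2) ii by (auto simp: inj_on_def)
    then show ?thesis by simp
  next
    case False
    have dq: "dp i < length b" "dp i' < length b" using ii I(1) by (auto simp: less_mult_imp_div_less mult.commute)
    have ne: "b ! dp i \<noteq> b ! dp i'" using False pb dq unfolding is_perm_def by (simp add: nth_eq_iff_index_eq)
    have ci: "c ! x = a ! (x mod length a) + length a * b ! dp x" "a ! (x mod length a) < length a"
      if "x \<in> I" for x
    proof -
      have "x < length c" using that I(1) lenc by auto
      then show "c ! x = a ! (x mod length a) + length a * b ! dp x" by (rule nthc)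
      have "x mod length a < length a" using p0 by simp
      then show "a ! (x mod length a) < length a" by (rule perm_bound[OF pa])
    qed
    have lt: "c ! x < c ! y" if "x \<in> I" "y \<in> I" "b ! dp x < b ! dp y" for x y
    proof -
      have "c ! x < length a + length a * b ! dp x" using ci[OF that(1)] by simp
      also have "\<dots> = length a * (b ! dp x + 1)" by simp
      also have "\<dots> \<le> length a * b ! dp y" using that(3) by (intro mult_le_mono2) simp
      also have "\<dots> \<le> c ! y" using ci[OF that(2)] by simp
      finally show ?thesis .
    qed
    show ?thesis
    proof (cases "b ! dp i < b ! dp i'")
      case True then show ?thesis using lt ii by auto
    next
      case F: False
      then have "b ! dp i' < b ! dp i" using ne by simp
      then have "c ! i' < c ! i" using lt ii by auto
      then show ?thesis using F by simp
    qed
  qed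
qed

lemma occ_bounds:
  assumes p0: "length a > 0"
  shows "occ \<pi> b * length a ^ length \<pi> \<le> occ \<pi> c"
    "occ \<pi> c \<le> occ \<pi> b * length a ^ length \<pi> + ((length a * length b choose length \<pi>) - (length b choose length \<pi>) * length a ^ length \<pi>)"
    "(length b choose length \<pi>) * length a ^ length \<pi> \<le> (length a * length b choose length \<pi>)"
proof -
  define k where "k = length \<pi>"
  define n where "n = length a * length b"
  let ?K = "{I. I \<subseteq> {..<n} \<and> card I = k}"
  let ?G = "{I. I \<subseteq> {..<n} \<and> card I = k \<and> inj_on dp I \<and> pat (dp ` I) b = \<pi>}"
  let ?D = "{I. I \<subseteq> {..<n} \<and> card I = k \<and> inj_on dp I \<and> True}"
  let ?O = "{I. I \<subseteq> {..<n} \<and> card I = k \<and> pat I c = \<pi>}"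
  have finK: "finite ?K" by (rule finite_subset[of _ "Pow {..<n}"]) auto
  have cK: "card ?K = n choose k" using n_subsets[of "{..<n}" k] by simp
  have cG: "card ?G = occ \<pi> b * length a ^ k"
    using count_decomp[OF p0, of k "\<lambda>J. pat J b = \<pi>"] occ_alt[of \<pi> b] n_def k_def by simp
  have cD: "card ?D = (length b choose k) * length a ^ k"
    using count_decomp[OF p0, of k "\<lambda>J. True"] n_subsets[of "{..<length b}" k] n_def by simp
  have oc: "occ \<pi> c = card ?O" using occ_alt[of \<pi> c] lenc n_def k_def by simp
  have GO: "?G \<subseteq> ?O"
  proof
    fix I assume "I \<in> ?G"
    then show "I \<in> ?O" using pat_dp[OF p0, of I] n_def by simp
  qed
  have OGD: "?O \<subseteq> ?G \<union> (?K - ?D)"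
  proof
    fix I assume I: "I \<in> ?O"
    show "I \<in> ?G \<union> (?K - ?D)"
    proof (cases "inj_on dp I")
      case True then show ?thesis using I pat_dp[OF p0, of I] n_def by simp
    next
      case False then show ?thesis using I by simp
    qed
  qed
  have DK: "?D \<subseteq> ?K" by auto
  have finO: "finite ?O" by (rule finite_subset[OF _ finK]) auto
  show "occ \<pi> b * length a ^ length \<pi> \<le> occ \<pi> c"
    using card_mono[OF finO GO] cG oc k_def by simp
  have cKD: "card (?K - ?D) = (n choose k) - (length b choose k) * length a ^ k"
    using card_Diff_subset[OF finite_subset[OF DK finK] DK] cK cD by simp
  have finG: "finite ?G" by (rule finite_subset[OF _ finK]) auto
  have "card ?O \<le> card (?G \<union> (?K - ?D))" by (rule card_mono[OF _ OGD]) (use finK finG in simp)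
  also have "\<dots> \<le> card ?G + card (?K - ?D)" by (rule card_Un_le)
  finally show "occ \<pi> c \<le> occ \<pi> b * length a ^ length \<pi> + ((length a * length b choose length \<pi>) - (length b choose length \<pi>) * length a ^ length \<pi>)"
    using oc cG cKD n_def k_def by simp
  show "(length b choose length \<pi>) * length a ^ length \<pi> \<le> (length a * length b choose length \<pi>)"
    using card_mono[OF finK DK] cK cD n_def k_def by simp
qed

end

context blk
begin

lemma occ_t_close:
  assumes p: "length a \<ge> 1" and kq: "length \<pi> \<le> length b" and q: "length b \<ge> 1"
  shows "\<bar>occ_t \<pi> c - occ_t \<pi> b\<bar> \<le> 1 - ((real (length b) - real (length \<pi>)) / real (length b)) ^ length \<pi>"
proof -
  define p where "p = length a"
  define q where "q = length b"
  define k where "k = length \<pi>"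
  define N where "N = p * q choose k"
  define B where "B = q choose k"
  define M where "M = B * p ^ k"
  have p0: "length a > 0" using p by linarith
  have ob: "occ \<pi> b * p ^ k \<le> occ \<pi> c" "occ \<pi> c \<le> occ \<pi> b * p ^ k + (N - M)" "M \<le> N"
    using occ_bounds[OF p0, of \<pi>] unfolding p_def q_def k_def N_def B_def M_def by auto
  have kpq: "k \<le> p * q" using kq p unfolding k_def q_def p_def by (metis le_trans mult_le_mono1 mult_1)
  have Bp: "B > 0" using kq unfolding B_def k_def q_def by simp
  have Np: "N > 0" using kpq unfolding N_def by simp
  have obB: "occ \<pi> b \<le> B" using occ_le_choose[of \<pi> b] unfolding B_def q_def k_def .
  have tb: "occ_t \<pi> b = real (occ \<pi> b) / real B"
    using kq unfolding occ_t_def B_def q_def k_def by simp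
  have tc: "occ_t \<pi> c = real (occ \<pi> c) / real N"
    using kpq lenc unfolding occ_t_def N_def q_def k_def p_def by simp
  define x where "x = real (occ \<pi> b) / real B"
  define \<rho> where "\<rho> = real M / real N"
  have x01: "0 \<le> x" "x \<le> 1" using obB Bp unfolding x_def by auto
  have r01: "0 \<le> \<rho>" "\<rho> \<le> 1" using ob(3) Np unfolding \<rho>_def by auto
  have key: "real (occ \<pi> b * p ^ k) / real N = x * \<rho>"
    using Bp Np unfolding x_def \<rho>_def M_def by (simp add: field_simps)
  have lo: "x * \<rho> \<le> occ_t \<pi> c"
  proof -
    have "real (occ \<pi> b * p ^ k) \<le> real (occ \<pi> c)" using ob(1) by (simp only: of_nat_le_iff)
    then have "real (occ \<pi> b * p ^ k) / real N \<le> real (occ \<pi> c) / real N"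
      by (rule divide_right_mono) simp
    then show ?thesis using key tc by simp
  qed
  have hi: "occ_t \<pi> c \<le> x * \<rho> + (1 - \<rho>)"
  proof -
    have "real (occ \<pi> c) \<le> real (occ \<pi> b * p ^ k + (N - M))" using ob(2) by (simp only: of_nat_le_iff)
    also have "\<dots> = real (occ \<pi> b * p ^ k) + (real N - real M)" using ob(3) by (simp add: of_nat_diff)
    finally have "real (occ \<pi> c) / real N \<le> (real (occ \<pi> b * p ^ k) + (real N - real M)) / real N"
      by (rule divide_right_mono) simp
    also have "\<dots> = real (occ \<pi> b * p ^ k) / real N + (1 - \<rho>)"
      using Np unfolding \<rho>_def by (simp add: field_simps)
    finally show ?thesis using key tc by simp
  qed
  have d1: "occ_t \<pi> c - occ_t \<pi> b \<le> 1 - \<rho>"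
  proof -
    have "(1 - \<rho>) * (1 - x) \<le> 1 - \<rho>" by (rule mult_left_le) (use x01 r01 in auto)
    moreover have "(1 - \<rho>) * (1 - x) = 1 - x - \<rho> + x * \<rho>" by (simp add: algebra_simps)
    moreover have "occ_t \<pi> b = x" using tb x_def by simp
    ultimately show ?thesis using hi by linarith
  qed
  have d2: "occ_t \<pi> b - occ_t \<pi> c \<le> 1 - \<rho>"
  proof -
    have "x * (1 - \<rho>) \<le> 1 - \<rho>" by (rule mult_left_le_one_le) (use x01 r01 in auto)
    moreover have "x * (1 - \<rho>) = x - x * \<rho>" by (simp add: algebra_simps)
    moreover have "occ_t \<pi> b = x" using tb x_def by simp
    ultimately show ?thesis using lo by linarith
  qed
  have "((real q - real k) / real q) ^ k * real N \<le> real M"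
    using binom_ratio[of k q p] kq p unfolding N_def M_def B_def k_def q_def p_def by simp
  then have "((real q - real k) / real q) ^ k \<le> \<rho>"
    using Np unfolding \<rho>_def by (simp add: pos_le_divide_eq)
  then show ?thesis using d1 d2 unfolding q_def k_def by linarith
qed

end

lemma tendsto_close:
  fixes f g e :: "nat \<Rightarrow> real"
  assumes "f \<longlonglongrightarrow> L" "eventually (\<lambda>m. \<bar>g m - f m\<bar> \<le> e m) sequentially" "e \<longlonglongrightarrow> 0"
  shows "g \<longlonglongrightarrow> L"
proof -
  have "(\<lambda>m. g m - f m) \<longlonglongrightarrow> 0" by (rule Lim_null_comparison[OF _ assms(3)]) (use assms(2) in simp)
  then have "(\<lambda>m. f m + (g m - f m)) \<longlonglongrightarrow> L + 0" by (rule tendsto_add[OF assms(1)])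
  then show ?thesis by simp
qed

lemma inv_to0:
  fixes s :: "nat \<Rightarrow> nat"
  assumes "filterlim s at_top sequentially"
  shows "(\<lambda>m. C / real (s m)) \<longlonglongrightarrow> 0"
proof -
  have "filterlim (\<lambda>m. real (s m)) at_top sequentially"
    by (rule filterlim_compose[OF filterlim_real_sequentially assms])
  then have "(\<lambda>m. inverse (real (s m))) \<longlonglongrightarrow> 0" by (rule tendsto_inverse_0_at_top)
  then have "(\<lambda>m. C * inverse (real (s m))) \<longlonglongrightarrow> C * 0" by (rule tendsto_mult[OF tendsto_const])
  then show ?thesis by (simp add: divide_inverse)
qed

lemma ratio_to1:
  fixes s :: "nat \<Rightarrow> nat"
  assumes "filterlim s at_top sequentially"
  shows "(\<lambda>m. 1 - ((real (s m) - real k) / real (s m)) ^ k) \<longlonglongrightarrow> 0"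
proof -
  have ev: "eventually (\<lambda>m. s m \<ge> 1) sequentially" using assms by (simp add: filterlim_at_top)
  have "(\<lambda>m. 1 - real k / real (s m)) \<longlonglongrightarrow> 1 - 0" by (rule tendsto_diff[OF tendsto_const inv_to0[OF assms]])
  then have l1: "(\<lambda>m. 1 - real k / real (s m)) \<longlonglongrightarrow> 1" by simp
  have "eventually (\<lambda>m. 1 - real k / real (s m) = (real (s m) - real k) / real (s m)) sequentially"
    using ev by eventually_elim (simp add: field_simps)
  from tendsto_cong[OF this, of 1] l1 have "(\<lambda>m. (real (s m) - real k) / real (s m)) \<longlonglongrightarrow> 1"
    by simp
  then have "(\<lambda>m. ((real (s m) - real k) / real (s m)) ^ k) \<longlonglongrightarrow> 1 ^ k" by (rule tendsto_power)
  then have "(\<lambda>m. 1 - ((real (s m) - real k) / real (s m)) ^ k) \<longlonglongrightarrow> 1 - 1"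
    by (intro tendsto_diff tendsto_const) simp
  then show ?thesis by simp
qed

lemma subst_blk:
  assumes "is_perm a" "is_perm b"
  shows "blk a b (subst b (replicate (length b) a))"
proof
  show "is_perm a" "is_perm b" using assms by auto
  show "length (subst b (replicate (length b) a)) = length a * length b"
    unfolding subst_eq[OF assms(2)] concat_blocks_len by simp
  fix k assume "k < length (subst b (replicate (length b) a))"
  then have "k < length b * length a"
    unfolding subst_eq[OF assms(2)] concat_blocks_len by simp
  then show "subst b (replicate (length b) a) ! k = a ! (k mod length a) + length a * b ! (k div length a)"
    unfolding subst_eq[OF assms(2)] by (simp add: concat_blocks_nth)
qed

lemma main_core:
  fixes sA sB :: "nat \<Rightarrow> nat list" and vA vB :: "nat list \<Rightarrow> real"
  assumes pA: "\<forall>m. is_perm (sA m)" and pB: "\<forall>m. is_perm (sB m)"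
    and fa: "filterlim (\<lambda>m. length (sA m)) at_top sequentially"
    and cA: "\<forall>\<pi>\<in>\<A>. (\<lambda>m. cocc_t \<pi> (sA m)) \<longlonglongrightarrow> vA \<pi>"
    and fb: "filterlim (\<lambda>m. length (sB m)) at_top sequentially"
    and cB: "\<forall>\<pi>\<in>\<B>. (\<lambda>m. occ_t \<pi> (sB m)) \<longlonglongrightarrow> vB \<pi>"
  shows "filterlim (\<lambda>m. length (subst (sB m) (replicate (length (sB m)) (sA m)))) at_top sequentially \<and>
    (\<forall>\<pi>\<in>\<A>. (\<lambda>m. cocc_t \<pi> (subst (sB m) (replicate (length (sB m)) (sA m)))) \<longlonglongrightarrow> vA \<pi>) \<and>
    (\<forall>\<pi>\<in>\<B>. (\<lambda>m. occ_t \<pi> (subst (sB m) (replicate (length (sB m)) (sA m)))) \<longlonglongrightarrow> vB \<pi>)"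
proof -
  define sC where "sC = (\<lambda>m. subst (sB m) (replicate (length (sB m)) (sA m)))"
  have B: "\<And>m. blk (sA m) (sB m) (sC m)" unfolding sC_def using pA pB subst_blk by blast
  have lenC: "\<And>m. length (sC m) = length (sA m) * length (sB m)" using blk.lenc[OF B] .
  have evA: "\<And>K. eventually (\<lambda>m. K \<le> length (sA m)) sequentially" using fa by (simp add: filterlim_at_top)
  have evB: "\<And>K. eventually (\<lambda>m. K \<le> length (sB m)) sequentially" using fb by (simp add: filterlim_at_top)
  have L: "filterlim (\<lambda>m. length (sC m)) at_top sequentially"
  proof (rule filterlim_at_top_mono[OF fb])
    show "eventually (\<lambda>m. length (sB m) \<le> length (sC m)) sequentially"
      using evA[of 1] by eventually_elim (simp add: lenC)
  qed
  have CA: "\<forall>\<pi>\<in>\<A>. (\<lambda>m. cocc_t \<pi> (sC m)) \<longlonglongrightarrow> vA \<pi>"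
  proof
    fix \<pi> assume \<pi>: "\<pi> \<in> \<A>"
    show "(\<lambda>m. cocc_t \<pi> (sC m)) \<longlonglongrightarrow> vA \<pi>"
    proof (rule tendsto_close)
      show "(\<lambda>m. cocc_t \<pi> (sA m)) \<longlonglongrightarrow> vA \<pi>" using cA \<pi> by auto
      show "(\<lambda>m. (real (length \<pi>) + 1) / real (length (sA m))) \<longlonglongrightarrow> 0" by (rule inv_to0[OF fa])
      show "eventually (\<lambda>m. \<bar>cocc_t \<pi> (sC m) - cocc_t \<pi> (sA m)\<bar> \<le> (real (length \<pi>) + 1) / real (length (sA m))) sequentially"
        using evA[of "length \<pi>"] evA[of 1] evB[of 1] by eventually_elim (rule blk.cocc_t_close[OF B])
    qed
  qed
  have CB: "\<forall>\<pi>\<in>\<B>. (\<lambda>m. occ_t \<pi> (sC m)) \<longlonglongrightarrow> vB \<pi>"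
  proof
    fix \<pi> assume \<pi>: "\<pi> \<in> \<B>"
    show "(\<lambda>m. occ_t \<pi> (sC m)) \<longlonglongrightarrow> vB \<pi>"
    proof (rule tendsto_close)
      show "(\<lambda>m. occ_t \<pi> (sB m)) \<longlonglongrightarrow> vB \<pi>" using cB \<pi> by auto
      show "(\<lambda>m. 1 - ((real (length (sB m)) - real (length \<pi>)) / real (length (sB m))) ^ length \<pi>) \<longlonglongrightarrow> 0"
        by (rule ratio_to1[OF fb])
      show "eventually (\<lambda>m. \<bar>occ_t \<pi> (sC m) - occ_t \<pi> (sB m)\<bar> \<le> 1 - ((real (length (sB m)) - real (length \<pi>)) / real (length (sB m))) ^ length \<pi>) sequentially"
        using evA[of 1] evB[of "length \<pi>"] evB[of 1] by eventually_elim (rule blk.occ_t_close[OF B])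
    qed
  qed
  show ?thesis using L CA CB unfolding sC_def by simp
qed

theorem mainTheorem14:
  fixes \<A> \<B> :: "nat list set"
  assumes "finite \<A>" and "finite \<B>"
    and "\<forall>\<pi>\<in>\<A>. is_perm \<pi>" and "\<forall>\<pi>\<in>\<B>. is_perm \<pi>"
  shows "limA \<A> \<times> limB \<B> = limC \<A> \<B> \<and>
    (\<forall>(sA::nat \<Rightarrow> nat list) (sB::nat \<Rightarrow> nat list) vA vB.
      vA \<in> limA \<A> \<and> vB \<in> limB \<B> \<and>
      (\<forall>m. is_perm (sA m)) \<and> (\<forall>m. is_perm (sB m)) \<and>
      filterlim (\<lambda>m. length (sA m)) at_top sequentially \<and>
      (\<forall>\<pi>\<in>\<A>. (\<lambda>m. cocc_t \<pi> (sA m)) \<longlonglongrightarrow> vA \<pi>) \<and>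
      filterlim (\<lambda>m. length (sB m)) at_top sequentially \<and>
      (\<forall>\<pi>\<in>\<B>. (\<lambda>m. occ_t \<pi> (sB m)) \<longlonglongrightarrow> vB \<pi>)
      \<longrightarrow>
      (let sC = (\<lambda>m. subst (sB m) (replicate (length (sB m)) (sA m))) in
        filterlim (\<lambda>m. length (sC m)) at_top sequentially \<and>
        (\<forall>\<pi>\<in>\<A>. (\<lambda>m. cocc_t \<pi> (sC m)) \<longlonglongrightarrow> vA \<pi>) \<and>
        (\<forall>\<pi>\<in>\<B>. (\<lambda>m. occ_t \<pi> (sC m)) \<longlonglongrightarrow> vB \<pi>)))"
proof (rule conjI)
  show "limA \<A> \<times> limB \<B> = limC \<A> \<B>"
  proof (intro equalityI subsetI)
    fix z assume "z \<in> limA \<A> \<times> limB \<B>"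
    then obtain vA vB where z: "z = (vA, vB)" "vA \<in> limA \<A>" "vB \<in> limB \<B>" by auto
    from z(2) obtain sA where vA: "vA \<in> \<A> \<rightarrow>\<^sub>E {0..1}" and sA: "\<forall>m. is_perm (sA m)"
      "filterlim (\<lambda>m. length (sA m)) at_top sequentially" "\<forall>\<pi>\<in>\<A>. (\<lambda>m. cocc_t \<pi> (sA m)) \<longlonglongrightarrow> vA \<pi>"
      unfolding limA_def by blast
    from z(3) obtain sB where vB: "vB \<in> \<B> \<rightarrow>\<^sub>E {0..1}" and sB: "\<forall>m. is_perm (sB m)"
      "filterlim (\<lambda>m. length (sB m)) at_top sequentially" "\<forall>\<pi>\<in>\<B>. (\<lambda>m. occ_t \<pi> (sB m)) \<longlonglongrightarrow> vB \<pi>"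
      unfolding limB_def by blast
    define sC where "sC = (\<lambda>m. subst (sB m) (replicate (length (sB m)) (sA m)))"
    have pC: "\<forall>m. is_perm (sC m)" unfolding sC_def using blk.pc[OF subst_blk] sA(1) sB(1) by blast
    have core: "filterlim (\<lambda>m. length (sC m)) at_top sequentially \<and>
        (\<forall>\<pi>\<in>\<A>. (\<lambda>m. cocc_t \<pi> (sC m)) \<longlonglongrightarrow> vA \<pi>) \<and>
        (\<forall>\<pi>\<in>\<B>. (\<lambda>m. occ_t \<pi> (sC m)) \<longlonglongrightarrow> vB \<pi>)"
      unfolding sC_def by (rule main_core[OF sA(1) sB(1) sA(2) sA(3) sB(2) sB(3)])
    show "z \<in> limC \<A> \<B>" unfolding limC_def z(1) using vA vB pC core by blast
  next
    fix z assume "z \<in> limC \<A> \<B>"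
    then obtain vA vB s where z: "z = (vA, vB)" and v: "vA \<in> \<A> \<rightarrow>\<^sub>E {0..1}" "vB \<in> \<B> \<rightarrow>\<^sub>E {0..1}"
      and s: "\<forall>m. is_perm (s m)" "filterlim (\<lambda>m. length (s m)) at_top sequentially"
        "\<forall>\<pi>\<in>\<A>. (\<lambda>m. cocc_t \<pi> (s m)) \<longlonglongrightarrow> vA \<pi>" "\<forall>\<pi>\<in>\<B>. (\<lambda>m. occ_t \<pi> (s m)) \<longlonglongrightarrow> vB \<pi>"
      unfolding limC_def by blast
    have "vA \<in> limA \<A>" unfolding limA_def using v(1) s(1,2,3) by blast
    moreover have "vB \<in> limB \<B>" unfolding limB_def using v(2) s(1,2,4) by blast
    ultimately show "z \<in> limA \<A> \<times> limB \<B>" using z by simp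
  qed
next
  show "\<forall>(sA::nat \<Rightarrow> nat list) (sB::nat \<Rightarrow> nat list) vA vB.
      vA \<in> limA \<A> \<and> vB \<in> limB \<B> \<and>
      (\<forall>m. is_perm (sA m)) \<and> (\<forall>m. is_perm (sB m)) \<and>
      filterlim (\<lambda>m. length (sA m)) at_top sequentially \<and>
      (\<forall>\<pi>\<in>\<A>. (\<lambda>m. cocc_t \<pi> (sA m)) \<longlonglongrightarrow> vA \<pi>) \<and>
      filterlim (\<lambda>m. length (sB m)) at_top sequentially \<and>
      (\<forall>\<pi>\<in>\<B>. (\<lambda>m. occ_t \<pi> (sB m)) \<longlonglongrightarrow> vB \<pi>)
      \<longrightarrow>
      (let sC = (\<lambda>m. subst (sB m) (replicate (length (sB m)) (sA m))) in
        filterlim (\<lambda>m. length (sC m)) at_top sequentially \<and>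
        (\<forall>\<pi>\<in>\<A>. (\<lambda>m. cocc_t \<pi> (sC m)) \<longlonglongrightarrow> vA \<pi>) \<and>
        (\<forall>\<pi>\<in>\<B>. (\<lambda>m. occ_t \<pi> (sC m)) \<longlonglongrightarrow> vB \<pi>))"
  proof (intro allI impI)
    fix sA sB :: "nat \<Rightarrow> nat list" and vA vB :: "nat list \<Rightarrow> real"
    assume H: "vA \<in> limA \<A> \<and> vB \<in> limB \<B> \<and>
      (\<forall>m. is_perm (sA m)) \<and> (\<forall>m. is_perm (sB m)) \<and>
      filterlim (\<lambda>m. length (sA m)) at_top sequentially \<and>
      (\<forall>\<pi>\<in>\<A>. (\<lambda>m. cocc_t \<pi> (sA m)) \<longlonglongrightarrow> vA \<pi>) \<and>
      filterlim (\<lambda>m. length (sB m)) at_top sequentially \<and>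
      (\<forall>\<pi>\<in>\<B>. (\<lambda>m. occ_t \<pi> (sB m)) \<longlonglongrightarrow> vB \<pi>)"
    have "filterlim (\<lambda>m. length (subst (sB m) (replicate (length (sB m)) (sA m)))) at_top sequentially \<and>
      (\<forall>\<pi>\<in>\<A>. (\<lambda>m. cocc_t \<pi> (subst (sB m) (replicate (length (sB m)) (sA m)))) \<longlonglongrightarrow> vA \<pi>) \<and>
      (\<forall>\<pi>\<in>\<B>. (\<lambda>m. occ_t \<pi> (subst (sB m) (replicate (length (sB m)) (sA m)))) \<longlonglongrightarrow> vB \<pi>)"
      using H by (intro main_core) auto
    then show "let sC = (\<lambda>m. subst (sB m) (replicate (length (sB m)) (sA m))) in
        filterlim (\<lambda>m. length (sC m)) at_top sequentially \<and>
        (\<forall>\<pi>\<in>\<A>. (\<lambda>m. cocc_t \<pi> (sC m)) \<longlonglongrightarrow> vA \<pi>) \<and>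
        (\<forall>\<pi>\<in>\<B>. (\<lambda>m. occ_t \<pi> (sC m)) \<longlonglongrightarrow> vB \<pi>)"
      unfolding Let_def .
  qed
qed

end
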